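(* Suppose that in a spherical tiling by angle congruent pentagons an angle value $\theta$ appears at no degree $3$ vertex. Let $v_k$ be the number of vertices of degree $k$. Then: (1) there is at most one angle value with this property; (2) $\theta$ appears exactly once among the five angles of the pentagon; (3) $2v_4+v_5\ge 12$; (4) there is a vertex of one of the following kinds: a degree $4$ vertex whose corners have angles $\alpha,\theta,\theta,\theta$ with $\alpha\neq\theta$; a degree $4$ vertex all of whose corners have angle $\theta$; or a degree $5$ vertex all of whose corners have angle $\theta$.
   Context: A spherical tiling by angle congruent pentagons is a graph embedded in the sphere whose faces (tiles) are all pentagons, the tiling being edge-to-edge with every vertex of degree at least $3$; each corner of each tile carries a positive real angle, the angles at every vertex sum to $2\pi$, and all tiles have the same multiset of five corner angles (the "pentagon"). An angle value appears at a vertex if some corner at that vertex has that angle. *)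

theory Defs
  imports Complex_Main "HOL-Library.Multiset"
begin

text \<open>Combinatorial maps: a graph 2-cell embedded in a closed surface is given by
a finite set of darts D (half-edges), a fixed-point-free involution al (the two darts
of an edge) and a permutation sg (rotation of darts around their common vertex).
Vertices are sg-orbits, edges are al-orbits, faces (tiles) are orbits of
phi = sg o al.  A dart d is identified with the corner of the tile (phi-orbit of d)
at the vertex (sg-orbit of d).\<close>

definition orb :: "('a \<Rightarrow> 'a) \<Rightarrow> 'a \<Rightarrow> 'a set" where
  "orb f x = {(f ^^ n) x | n. True}"

definition vertices_of :: "'a set \<Rightarrow> ('a \<Rightarrow> 'a) \<Rightarrow> 'a set set" where
  "vertices_of D sg = orb sg ` D"

definition edges_of :: "'a set \<Rightarrow> ('a \<Rightarrow> 'a) \<Rightarrow> 'a set set" where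
  "edges_of D al = orb al ` D"

definition faces_of :: "'a set \<Rightarrow> ('a \<Rightarrow> 'a) \<Rightarrow> ('a \<Rightarrow> 'a) \<Rightarrow> 'a set set" where
  "faces_of D al sg = orb (sg \<circ> al) ` D"

definition spherical_map :: "'a set \<Rightarrow> ('a \<Rightarrow> 'a) \<Rightarrow> ('a \<Rightarrow> 'a) \<Rightarrow> bool" where
  "spherical_map D al sg \<longleftrightarrow>
     finite D \<and> D \<noteq> {} \<and>
     bij_betw al D D \<and> bij_betw sg D D \<and>
     (\<forall>d\<in>D. al (al d) = d \<and> al d \<noteq> d) \<and>
     (\<forall>d\<in>D. \<forall>e\<in>D. (d, e) \<in> ({(x, al x) | x. x \<in> D} \<union> {(x, sg x) | x. x \<in> D})\<^sup>*) \<and>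
     int (card (vertices_of D sg)) - int (card (edges_of D al)) + int (card (faces_of D al sg)) = 2"

definition pentagonal_tiling :: "'a set \<Rightarrow> ('a \<Rightarrow> 'a) \<Rightarrow> ('a \<Rightarrow> 'a) \<Rightarrow> bool" where
  "pentagonal_tiling D al sg \<longleftrightarrow>
     spherical_map D al sg \<and>
     (\<forall>d\<in>D. card (orb sg d) \<ge> 3) \<and>
     (\<forall>d\<in>D. card (orb (sg \<circ> al) d) = 5 \<and> inj_on (orb sg) (orb (sg \<circ> al) d))"

definition angle_congruent_tiling ::
  "'a set \<Rightarrow> ('a \<Rightarrow> 'a) \<Rightarrow> ('a \<Rightarrow> 'a) \<Rightarrow> ('a \<Rightarrow> real) \<Rightarrow> real multiset \<Rightarrow> bool" where
  "angle_congruent_tiling D al sg ang P \<longleftrightarrow>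
     pentagonal_tiling D al sg \<and>
     (\<forall>d\<in>D. ang d > 0) \<and>
     (\<forall>d\<in>D. (\<Sum>x\<in>orb sg d. ang x) = 2 * pi) \<and>
     (\<forall>d\<in>D. image_mset ang (mset_set (orb (sg \<circ> al) d)) = P)"

definition absent_at_deg3 :: "'a set \<Rightarrow> ('a \<Rightarrow> 'a) \<Rightarrow> ('a \<Rightarrow> real) \<Rightarrow> real \<Rightarrow> bool" where
  "absent_at_deg3 D sg ang th \<longleftrightarrow>
     (\<forall>v\<in>vertices_of D sg. card v = 3 \<longrightarrow> (\<forall>x\<in>v. ang x \<noteq> th))"

definition num_deg :: "'a set \<Rightarrow> ('a \<Rightarrow> 'a) \<Rightarrow> nat \<Rightarrow> nat" where
  "num_deg D sg k = card {v \<in> vertices_of D sg. card v = k}"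

end

theory Submission
  imports Defs
begin

lemma orb_funpow_mem: "(f ^^ n) x \<in> orb f x"
  unfolding orb_def by blast

lemma orb_self: "x \<in> orb f x"
  using orb_funpow_mem[where f=f and n=0 and x=x] by simp

lemma orb_subset:
  assumes "bij_betw f D D" "x \<in> D" shows "orb f x \<subseteq> D"
proof
  fix y assume "y \<in> orb f x"
  then obtain n where "y = (f ^^ n) x" unfolding orb_def by blast
  then show "y \<in> D" using bij_betw_funpow[OF assms(1), of n] assms(2)
    by (metis bij_betw_apply)
qed

lemma orb_period:
  assumes "finite D" "bij_betw f D D" "x \<in> D"
  shows "\<exists>p>0. (f ^^ p) x = x"
proof -
  let ?g = "\<lambda>n. (f ^^ n) x"
  have "range ?g \<subseteq> D" by (auto intro!: subsetD[OF orb_subset[OF assms(2,3)]] orb_funpow_mem)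
  then have "finite (range ?g)" using assms(1) finite_subset by blast
  then have "\<not> inj ?g" using finite_imageD infinite_UNIV_nat by blast
  then obtain i j where ij: "i \<noteq> j" "?g i = ?g j" unfolding inj_def by blast
  have key: "\<exists>p>0. (f ^^ p) x = x" if "i < j" "?g i = ?g j" for i j
  proof -
    have "(f ^^ i) ((f ^^ (j - i)) x) = (f ^^ j) x"
    proof -
      have "(f ^^ i) ((f ^^ (j - i)) x) = (f ^^ (i + (j - i))) x" by (simp add: funpow_add)
      also have "i + (j - i) = j" using that(1) by simp
      finally show ?thesis .
    qed
    then have "(f ^^ i) ((f ^^ (j - i)) x) = (f ^^ i) x" using that(2) by simp
    moreover have "inj_on (f ^^ i) D" using bij_betw_funpow[OF assms(2)] bij_betw_def by blast
    moreover have "(f ^^ (j - i)) x \<in> D" by (auto intro!: subsetD[OF orb_subset[OF assms(2,3)]] orb_funpow_mem)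
    ultimately have "(f ^^ (j - i)) x = x" using assms(3) by (meson inj_onD)
    then show ?thesis using that(1) by (intro exI[of _ "j - i"]) simp
  qed
  show ?thesis
  proof (cases "i < j")
    case True then show ?thesis using key ij by blast
  next
    case False then have "j < i" using ij by simp
    then show ?thesis using key[of j i] ij(2) by simp
  qed
qed

lemma orb_trans: "y \<in> orb f x \<Longrightarrow> orb f y \<subseteq> orb f x"
proof
  fix z assume "y \<in> orb f x" "z \<in> orb f y"
  then obtain n m where "y = (f ^^ n) x" "z = (f ^^ m) y" unfolding orb_def by blast
  then have "z = (f ^^ (m + n)) x" by (simp add: funpow_add)
  then show "z \<in> orb f x" by (simp add: orb_funpow_mem)
qed

lemma orb_eq:
  assumes "finite D" "bij_betw f D D" "x \<in> D" "y \<in> orb f x"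
  shows "orb f y = orb f x"
proof
  show "orb f y \<subseteq> orb f x" using orb_trans[OF assms(4)] .
  obtain p where p: "p > 0" "(f ^^ p) x = x" using orb_period[OF assms(1-3)] by blast
  obtain n where n: "y = (f ^^ n) x" using assms(4) unfolding orb_def by blast
  have pk: "(f ^^ (p * k)) x = x" for k
  proof (induction k)
    case 0 then show ?case by simp
  next
    case (Suc k)
    have "(f ^^ (p * Suc k)) x = (f ^^ p) ((f ^^ (p * k)) x)"
      by (simp only: mult_Suc_right funpow_add o_apply)
    then show ?case using Suc p(2) by simp
  qed
  obtain q where q: "p = Suc q" using p(1) gr0_implies_Suc by blast
  have e: "q * n + n = p * n" using q by simp
  have "(f ^^ (p * n)) x = (f ^^ (q * n)) ((f ^^ n) x)"
    by (simp only: e[symmetric] funpow_add o_apply)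
  then have "(f ^^ (q * n)) y = x" using pk[of n] n by simp
  then have "x \<in> orb f y" using orb_funpow_mem by metis
  then show "orb f x \<subseteq> orb f y" by (rule orb_trans)
qed

lemma orb_sum:
  assumes "finite D" "bij_betw f D D" "A \<subseteq> D"
  shows "card A = (\<Sum>c\<in>orb f ` D. card (c \<inter> A))"
proof -
  have fin: "finite (orb f ` D)" using assms(1) by simp
  have finc: "\<forall>c\<in>orb f ` D. finite (c \<inter> A)" using assms finite_subset by blast
  have disj: "\<forall>c\<in>orb f ` D. \<forall>c'\<in>orb f ` D. c \<noteq> c' \<longrightarrow> (c \<inter> A) \<inter> (c' \<inter> A) = {}"
  proof (intro ballI impI)
    fix c c' assume "c \<in> orb f ` D" "c' \<in> orb f ` D" "c \<noteq> c'"
    then obtain a b where ab: "a \<in> D" "b \<in> D" "c = orb f a" "c' = orb f b" by blast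
    show "(c \<inter> A) \<inter> (c' \<inter> A) = {}"
    proof (rule ccontr)
      assume "(c \<inter> A) \<inter> (c' \<inter> A) \<noteq> {}"
      then obtain y where y: "y \<in> orb f a" "y \<in> orb f b" using ab by blast
      have "orb f y = c" using orb_eq[OF assms(1,2) ab(1) y(1)] ab(3) by simp
      moreover have "orb f y = c'" using orb_eq[OF assms(1,2) ab(2) y(2)] ab(4) by simp
      ultimately have "c = c'" by simp
      then show False using \<open>c \<noteq> c'\<close> by simp
    qed
  qed
  have "(\<Union>c\<in>orb f ` D. c \<inter> A) = A"
  proof
    show "(\<Union>c\<in>orb f ` D. c \<inter> A) \<subseteq> A" by blast
    show "A \<subseteq> (\<Union>c\<in>orb f ` D. c \<inter> A)"
    proof
      fix a assume "a \<in> A"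
      then have "a \<in> D" "a \<in> orb f a" using assms(3) orb_self by auto
      then show "a \<in> (\<Union>c\<in>orb f ` D. c \<inter> A)" using \<open>a \<in> A\<close> by blast
    qed
  qed
  then show ?thesis using card_UN_disjoint[OF fin finc disj] by simp
qed

lemma count_img: "finite S \<Longrightarrow> count (image_mset g (mset_set S)) t = card {x\<in>S. g x = t}"
proof (induction S rule: finite_induct)
  case empty then show ?case by simp
next
  case (insert a S)
  then have "{x\<in>insert a S. g x = t} = (if g a = t then insert a {x\<in>S. g x = t} else {x\<in>S. g x = t})"
    by auto
  then show ?case using insert by auto
qed

lemma orb_invol:
  assumes "\<forall>d\<in>D. al (al d) = d" "d \<in> D" shows "orb al d = {d, al d}"
proof
  have "(al ^^ n) d \<in> {d, al d}" for n
  proof (induction n)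
    case 0 then show ?case by simp
  next
    case (Suc n)
    then show ?case using assms by auto
  qed
  then show "orb al d \<subseteq> {d, al d}" unfolding orb_def by blast
  show "{d, al d} \<subseteq> orb al d" using orb_funpow_mem[where f=al and n=1 and x=d] orb_self by auto
qed


theorem lemma4:
  fixes D :: "'a set" and al sg :: "'a \<Rightarrow> 'a" and ang :: "'a \<Rightarrow> real"
    and P :: "real multiset" and th :: real
  assumes tiling: "angle_congruent_tiling D al sg ang P"
    and th_angle: "th \<in># P"
    and th_absent: "absent_at_deg3 D sg ang th"
  shows "(\<forall>th'. th' \<in># P \<and> absent_at_deg3 D sg ang th' \<longrightarrow> th' = th)
    \<and> count P th = 1
    \<and> 2 * num_deg D sg 4 + num_deg D sg 5 \<ge> 12
    \<and> (\<exists>v\<in>vertices_of D sg.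
          (card v = 4 \<and> (\<exists>a. a \<noteq> th \<and> image_mset ang (mset_set v) = {#a, th, th, th#}))
        \<or> (card v = 4 \<and> (\<forall>x\<in>v. ang x = th))
        \<or> (card v = 5 \<and> (\<forall>x\<in>v. ang x = th)))"
proof -
  have finD: "finite D" and bal: "bij_betw al D D" and bsg: "bij_betw sg D D"
    and inv: "\<forall>d\<in>D. al (al d) = d \<and> al d \<noteq> d"
    and euler: "int (card (vertices_of D sg)) - int (card (edges_of D al)) + int (card (faces_of D al sg)) = 2"
    and deg: "\<forall>d\<in>D. card (orb sg d) \<ge> 3"
    and f5: "\<forall>d\<in>D. card (orb (sg \<circ> al) d) = 5"
    and fP: "\<forall>d\<in>D. image_mset ang (mset_set (orb (sg \<circ> al) d)) = P"
    using tiling unfolding angle_congruent_tiling_def pentagonal_tiling_def spherical_map_def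
    by blast+
  have bph: "bij_betw (sg \<circ> al) D D" using bij_betw_trans[OF bal bsg] .
  define V where "V = vertices_of D sg"
  define E where "E = edges_of D al"
  define F where "F = faces_of D al sg"
  have V: "V = orb sg ` D" unfolding V_def vertices_of_def ..
  have E: "E = orb al ` D" unfolding E_def edges_of_def ..
  have F: "F = orb (sg \<circ> al) ` D" unfolding F_def faces_of_def ..
  have finV: "finite V" using V finD by simp
  have vsub: "v \<subseteq> D" if "v \<in> V" for v using that V orb_subset[OF bsg] by blast
  have vdeg: "card v \<ge> 3" if "v \<in> V" for v using that V deg by blast
  have hV: "card D = (\<Sum>v\<in>V. card v)"
  proof -
    have "card D = (\<Sum>v\<in>V. card (v \<inter> D))" using orb_sum[OF finD bsg, of D] V by simp
    also have "\<dots> = (\<Sum>v\<in>V. card v)" using vsub by (intro sum.cong) (auto simp: Int_absorb2)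
    finally show ?thesis .
  qed
  have hE: "card D = 2 * card E"
  proof -
    have "card D = (\<Sum>c\<in>E. card (c \<inter> D))" using orb_sum[OF finD bal, of D] E by simp
    also have "\<dots> = (\<Sum>c\<in>E. 2)"
    proof (intro sum.cong refl)
      fix c assume "c \<in> E"
      then obtain d where d: "d \<in> D" "c = orb al d" using E by blast
      have inv1: "\<forall>d\<in>D. al (al d) = d" using inv by blast
      have cc: "c = {d, al d}" using orb_invol[OF inv1 d(1)] d(2) by simp
      have ald: "al d \<in> D" by (rule bij_betw_apply[OF bal d(1)])
      have ne: "al d \<noteq> d" using inv d(1) by blast
      have "c \<inter> D = {d, al d}" using cc ald d(1) by blast
      then show "card (c \<inter> D) = 2" using ne by simp
    qed
    finally show ?thesis by simp
  qed
  have fcnt: "card {d\<in>D. ang d = t} = card F * count P t" for t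
  proof -
    have "card {d\<in>D. ang d = t} = (\<Sum>c\<in>F. card (c \<inter> {d\<in>D. ang d = t}))"
      using orb_sum[OF finD bph, of "{d\<in>D. ang d = t}"] F by simp
    also have "\<dots> = (\<Sum>c\<in>F. count P t)"
    proof (intro sum.cong refl)
      fix c assume "c \<in> F"
      then obtain d where d: "d \<in> D" "c = orb (sg \<circ> al) d" using F by blast
      have cD: "c \<subseteq> D" using d orb_subset[OF bph] by blast
      then have fc: "finite c" using finD finite_subset by blast
      have "c \<inter> {d\<in>D. ang d = t} = {x\<in>c. ang x = t}" using cD by blast
      then show "card (c \<inter> {d\<in>D. ang d = t}) = count P t"
        using count_img[OF fc, of ang t] fP d by simp
    qed
    finally show ?thesis by simp
  qed
  have hF: "card D = 5 * card F"
  proof -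
    have "card D = (\<Sum>c\<in>F. card (c \<inter> D))" using orb_sum[OF finD bph, of D] F by simp
    also have "\<dots> = (\<Sum>c\<in>F. 5)"
    proof (intro sum.cong refl)
      fix c assume "c \<in> F"
      then obtain d where d: "d \<in> D" "c = orb (sg \<circ> al) d" using F by blast
      have cD: "c \<subseteq> D" using d orb_subset[OF bph] by blast
      then show "card (c \<inter> D) = 5" using f5 d by (simp add: Int_absorb2)
    qed
    finally show ?thesis by simp
  qed
  have eul: "int (card V) - int (card E) + int (card F) = 2" unfolding V_def E_def F_def using euler .
  have vsum: "int (card A) = (\<Sum>v\<in>V. int (card (v \<inter> A)))" if "A \<subseteq> D" for A
  proof -
    have "card A = (\<Sum>v\<in>V. card (v \<inter> A))" using orb_sum[OF finD bsg that] V by simp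
    then show ?thesis by (simp add: of_nat_sum)
  qed
  have csum: "(\<Sum>v\<in>V. 2 * (int (card v) - 3)) = int (card F) - 12"
  proof -
    have "(\<Sum>v\<in>V. 2 * (int (card v) - 3)) = 2 * (\<Sum>v\<in>V. int (card v)) - 6 * int (card V)"
      by (simp add: sum_subtractf sum_distrib_left)
    also have "(\<Sum>v\<in>V. int (card v)) = int (card D)" using hV by (simp add: of_nat_sum)
    finally show ?thesis using hE hF eul by arith
  qed
  have tle: "card (v \<inter> A) \<le> card v" if "v \<in> V" for v A
    using that vsub finD finite_subset by (meson card_mono inf_le1)
  have bound: "int (card A) \<le> 2 * int (card F) - 24"
    if A: "A \<subseteq> D" "\<forall>v\<in>V. card v = 3 \<longrightarrow> v \<inter> A = {}" for A
  proof -
    have "int (card A) \<le> (\<Sum>v\<in>V. 2 * (2 * (int (card v) - 3)))"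
      unfolding vsum[OF A(1)]
    proof (intro sum_mono)
      fix v assume v: "v \<in> V"
      show "int (card (v \<inter> A)) \<le> 2 * (2 * (int (card v) - 3))"
      proof (cases "card v = 3")
        case True then show ?thesis using A(2) v by simp
      next
        case False
        then have "card v \<ge> 4" using vdeg[OF v] by presburger
        then have "int (card v) \<ge> 4" by simp
        moreover have "int (card (v \<inter> A)) \<le> int (card v)" using tle[OF v, of A] by simp
        ultimately show ?thesis by arith
      qed
    qed
    also have "\<dots> = 2 * (\<Sum>v\<in>V. 2 * (int (card v) - 3))" by (simp add: sum_distrib_left)
    finally show ?thesis using csum by simp
  qed
  define Ath where "Ath = {d\<in>D. ang d = th}"
  have AthD: "Ath \<subseteq> D" unfolding Ath_def by blast
  have absV: "\<forall>v\<in>V. card v = 3 \<longrightarrow> v \<inter> {d\<in>D. ang d = t} = {}"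
    if "absent_at_deg3 D sg ang t" for t
    using that unfolding absent_at_deg3_def V_def by blast
  have absth: "\<forall>v\<in>V. card v = 3 \<longrightarrow> v \<inter> Ath = {}" using absV[OF th_absent] Ath_def by simp
  have c1: "count P th \<ge> 1" using th_angle by (simp add: Suc_le_eq)
  have cAth: "card Ath = card F * count P th" using fcnt Ath_def by simp
  have P2: "count P th = 1"
  proof (rule ccontr)
    assume "count P th \<noteq> 1"
    then have "count P th \<ge> 2" using c1 by presburger
    then have "card Ath \<ge> card F * 2" using cAth mult_le_mono2 by metis
    then show False using bound[OF AthD absth] by arith
  qed
  have P1: "\<forall>th'. th' \<in># P \<and> absent_at_deg3 D sg ang th' \<longrightarrow> th' = th"
  proof (intro allI impI)
    fix th' assume h: "th' \<in># P \<and> absent_at_deg3 D sg ang th'"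
    show "th' = th"
    proof (rule ccontr)
      assume ne: "th' \<noteq> th"
      define B where "B = {d\<in>D. ang d = th'}"
      have "card B = card F * count P th'" using fcnt B_def by simp
      moreover have "count P th' \<ge> 1" using h by (simp add: Suc_le_eq)
      ultimately have cB: "card B \<ge> card F" using mult_le_mono2[of 1 "count P th'" "card F"] by simp
      have dis: "Ath \<inter> B = {}" using ne Ath_def B_def by auto
      have finA: "finite Ath" "finite B" using finD Ath_def B_def by auto
      have "card (Ath \<union> B) = card Ath + card B" using card_Un_disjoint[OF finA dis] .
      moreover have "card Ath \<ge> card F" using cAth c1 mult_le_mono2[of 1 "count P th" "card F"] by simp
      moreover have "Ath \<union> B \<subseteq> D" using Ath_def B_def by auto
      moreover have "\<forall>v\<in>V. card v = 3 \<longrightarrow> v \<inter> (Ath \<union> B) = {}"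
        using absth absV[of th'] h B_def by blast
      ultimately show False using bound[of "Ath \<union> B"] cB by arith
    qed
  qed
  have "card F * 1 \<le> card F * count P th" using c1 by (rule mult_le_mono2)
  then have hAF: "card F \<le> card Ath" unfolding cAth by (simp only: mult_1_right)
  then have AthF: "int (card Ath) \<ge> int (card F)" by simp
  have nd: "int (num_deg D sg k) = (\<Sum>v\<in>V. if card v = k then 1 else 0)" for k
  proof -
    have "(\<Sum>v\<in>V. if card v = k then (1::int) else 0) = (\<Sum>v\<in>{v\<in>V. card v = k}. 1)"
      using sum.inter_filter[OF finV, of "\<lambda>_. (1::int)" "\<lambda>v. card v = k"] by simp
    then show ?thesis unfolding num_deg_def V_def[symmetric] by simp
  qed
  have P3: "2 * num_deg D sg 4 + num_deg D sg 5 \<ge> 12"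
  proof -
    have "int (card Ath) \<le> (\<Sum>v\<in>V. 2 * (int (card v) - 3) + (2 * (if card v = 4 then 1 else 0)
        + (if card v = 5 then 1 else 0)))"
      unfolding vsum[OF AthD]
    proof (intro sum_mono)
      fix v assume v: "v \<in> V"
      show "int (card (v \<inter> Ath)) \<le> 2 * (int (card v) - 3) + (2 * (if card v = 4 then 1 else 0)
        + (if card v = 5 then 1 else 0))"
      proof (cases "card v = 3")
        case True then show ?thesis using absth v by simp
      next
        case False then show ?thesis using vdeg[OF v] tle[OF v, of Ath] by auto
      qed
    qed
    also have "\<dots> = int (card F) - 12 + 2 * int (num_deg D sg 4) + int (num_deg D sg 5)"
      unfolding nd csum[symmetric] by (simp add: sum.distrib sum_distrib_left)
    finally show ?thesis using AthF by arith
  qed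
  have P4: "\<exists>v\<in>V.
          (card v = 4 \<and> (\<exists>a. a \<noteq> th \<and> image_mset ang (mset_set v) = {#a, th, th, th#}))
        \<or> (card v = 4 \<and> (\<forall>x\<in>v. ang x = th))
        \<or> (card v = 5 \<and> (\<forall>x\<in>v. ang x = th))"
  proof (rule ccontr)
    assume nex: "\<not> ?thesis"
    have "int (card Ath) \<le> (\<Sum>v\<in>V. 2 * (int (card v) - 3))"
      unfolding vsum[OF AthD]
    proof (intro sum_mono)
      fix v assume v: "v \<in> V"
      have fv: "finite v" using vsub[OF v] finD finite_subset by blast
      have allth: "\<forall>x\<in>v. ang x = th" if "card (v \<inter> Ath) = card v"
      proof -
        have "v \<inter> Ath = v" using card_subset_eq[OF fv _ that] by blast
        then show ?thesis using Ath_def by blast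
      qed
      have img: "image_mset ang (mset_set S) = replicate_mset (card S) th"
        if "S \<subseteq> Ath" "finite S" for S
      proof -
        have "image_mset ang (mset_set S) = image_mset (\<lambda>_. th) (mset_set S)"
          using that Ath_def by (intro image_mset_cong) auto
        then show ?thesis using that by (simp add: image_mset_const_eq)
      qed
      show "int (card (v \<inter> Ath)) \<le> 2 * (int (card v) - 3)"
      proof -
        consider "card v = 3" | "card v = 4" | "card v = 5" | "card v \<ge> 6" using vdeg[OF v] by arith
        then show ?thesis
        proof cases
          case 1 then show ?thesis using absth v by simp
        next
          case 2
          have "card (v \<inter> Ath) \<noteq> 4"
          proof
            assume "card (v \<inter> Ath) = 4"
            then have "\<forall>x\<in>v. ang x = th" using allth 2 by simp
            then show False using nex v 2 by blast
          qed
          moreover have "card (v \<inter> Ath) \<noteq> 3"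
          proof
            assume t3: "card (v \<inter> Ath) = 3"
            have "card (v - Ath) = 1" using card_Diff_subset_Int[of v Ath] fv 2 t3
              by (simp add: Diff_Int2 card_Diff_subset_Int)
            then obtain x where x: "v - Ath = {x}" using card_1_singletonE by blast
            then have xv: "x \<in> v" "x \<notin> Ath" by auto
            then have ax: "ang x \<noteq> th" using vsub[OF v] Ath_def by auto
            have vi: "v = insert x (v \<inter> Ath)" using x by blast
            have "mset_set v = add_mset x (mset_set (v \<inter> Ath))"
              using fv xv by (subst vi) simp
            then have "image_mset ang (mset_set v) = add_mset (ang x) (replicate_mset 3 th)"
              using img[of "v \<inter> Ath"] fv t3 by simp
            also have "\<dots> = {#ang x, th, th, th#}" by (simp add: numeral_eq_Suc)
            finally show False using nex v 2 ax by blast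
          qed
          ultimately have "card (v \<inter> Ath) \<le> 2" using 2 tle[OF v, of Ath] by presburger
          then show ?thesis using 2 by simp
        next
          case 3
          have "card (v \<inter> Ath) \<noteq> 5"
          proof
            assume "card (v \<inter> Ath) = 5"
            then have "\<forall>x\<in>v. ang x = th" using allth 3 by simp
            then show False using nex v 3 by blast
          qed
          then have "card (v \<inter> Ath) \<le> 4" using 3 tle[OF v, of Ath] by presburger
          then show ?thesis using 3 by simp
        next
          case 4 then show ?thesis using tle[OF v, of Ath] by arith
        qed
      qed
    qed
    then show False using csum AthF by arith
  qed
  have P4': "\<exists>v\<in>vertices_of D sg.
          (card v = 4 \<and> (\<exists>a. a \<noteq> th \<and> image_mset ang (mset_set v) = {#a, th, th, th#}))
        \<or> (card v = 4 \<and> (\<forall>x\<in>v. ang x = th))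
        \<or> (card v = 5 \<and> (\<forall>x\<in>v. ang x = th))" using P4 unfolding V_def .
  show ?thesis using P1 P2 P3 P4' by (intro conjI)
qed

end
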